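(* Let $(p_{ij})_{i,j\in\{0,1\}}$ be a transition matrix with all $p_{ij}\in(0,1)$, and for $i\in\{0,1\}$, $n\in\mathbb N_0$ let $I_n^i$ be binomially $B(n,p_{i0})$ distributed. Let $(a_i(n))_{n\in\mathbb N_0}$, $(\varepsilon_i(n))_{n\in\mathbb N_0}$, $i\in\{0,1\}$, be real sequences satisfying $$a_i(n)=p_{i0}\mathbb E[a_0(I_n^i)]+p_{i1}\mathbb E[a_1(n-I_n^i)]+\varepsilon_i(n),\qquad i\in\{0,1\},\ n\in\mathbb N.$$ If $\varepsilon_i(n)=O(n^\alpha)$ for some $\alpha\in\mathbb R$ and both $i$, then as $n\to\infty$, $a_i(n)=O(1)$ if $\alpha<0$, $a_i(n)=O(n^\alpha)$ if $\alpha>0$, and $a_i(n)=O(\log n)$ if $\alpha=0$. *)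

theory Defs
  imports "HOL-Probability.Probability" "HOL-Library.Landau_Symbols"
begin

end

theory Submission
  imports Defs
begin

definition bw :: "nat \<Rightarrow> real \<Rightarrow> nat \<Rightarrow> real" where
  "bw n P k = real (n choose k) * P^k * (1-P)^(n-k)"

lemma bw_nonneg: "0 \<le> P \<Longrightarrow> P \<le> 1 \<Longrightarrow> 0 \<le> bw n P k"
  unfolding bw_def by simp

lemma bw_sum: "(\<Sum>k\<le>n. bw n P k) = 1"
  using binomial_ring[of P "1-P" n] by (simp add: bw_def)

lemma bw_mean: "(\<Sum>k\<le>n. bw n P k * real k) = real n * P"
proof (cases n)
  case 0 then show ?thesis by (simp add: bw_def)
next
  case (Suc m)
  have "(\<Sum>k\<le>Suc m. bw (Suc m) P k * real k) = (\<Sum>k\<le>m. bw (Suc m) P (Suc k) * real (Suc k))"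
    by (subst sum.atMost_Suc_shift) simp
  also have "\<dots> = (\<Sum>k\<le>m. real (Suc m) * P * bw m P k)"
  proof (rule sum.cong)
    fix k assume k: "k \<in> {..m}"
    have e: "real (Suc k) * real (Suc m choose Suc k) = real (Suc m) * real (m choose k)"
      using Suc_times_binomial_eq[of m k] by (metis of_nat_mult mult.commute)
    have "bw (Suc m) P (Suc k) * real (Suc k) = (real (Suc k) * real (Suc m choose Suc k)) * P * P^k * (1-P)^(m-k)"
      by (simp add: bw_def)
    also have "\<dots> = real (Suc m) * P * bw m P k" unfolding e by (simp add: bw_def)
    finally show "bw (Suc m) P (Suc k) * real (Suc k) = real (Suc m) * P * bw m P k" .
  qed simp
  also have "\<dots> = real (Suc m) * P" by (simp add: sum_distrib_left[symmetric] bw_sum)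
  finally show ?thesis using Suc by simp
qed

lemma bw_mean2: "(\<Sum>k\<le>n. bw n P k * real (n - k)) = real n * (1 - P)"
proof -
  have "(\<Sum>k\<le>n. bw n P k * real (n - k)) = (\<Sum>k\<le>n. real n * bw n P k - bw n P k * real k)"
    by (rule sum.cong) (auto simp: of_nat_diff algebra_simps)
  also have "\<dots> = real n - real n * P"
    by (simp add: sum_subtractf sum_distrib_left[symmetric] bw_sum bw_mean)
  finally show ?thesis by (simp add: algebra_simps)
qed

lemma exp_bw: "0 \<le> P \<Longrightarrow> P \<le> 1 \<Longrightarrow>
  measure_pmf.expectation (binomial_pmf n P) (g :: nat \<Rightarrow> real) = (\<Sum>k\<le>n. bw n P k * g k)"
  by (subst expectation_binomial_pmf') (auto simp: bw_def)

lemma bw_n: "bw n P n = P^n" by (simp add: bw_def)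
lemma bw_0: "bw n P 0 = (1-P)^n" by (simp add: bw_def)

lemma compare:
  fixes P Q :: "nat \<Rightarrow> real" and a eps :: "nat \<Rightarrow> nat \<Rightarrow> real" and f :: "nat \<Rightarrow> real"
  assumes PQ: "\<And>i. i \<in> {0,1} \<Longrightarrow> 0 < P i \<and> P i < 1 \<and> Q i = 1 - P i"
    and rec: "\<And>i n. i \<in> {0,1} \<Longrightarrow> n \<ge> 1 \<Longrightarrow> a i n = P i * (\<Sum>k\<le>n. bw n (P i) k * a 0 k)
        + Q i * (\<Sum>k\<le>n. bw n (P i) k * a 1 (n-k)) + eps i n"
    and base: "\<And>n j. n < N \<Longrightarrow> j \<in> {0,1} \<Longrightarrow> \<bar>a j n\<bar> \<le> f n"
    and N1: "N \<ge> 1"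
    and step: "\<And>n i. n \<ge> N \<Longrightarrow> i \<in> {0,1} \<Longrightarrow> P i * (\<Sum>k\<le>n. bw n (P i) k * f k)
        + Q i * (\<Sum>k\<le>n. bw n (P i) k * f (n-k)) + \<bar>eps i n\<bar> \<le> f n"
  shows "j \<in> {0,1} \<Longrightarrow> \<bar>a j n\<bar> \<le> f n"
proof (induction n arbitrary: j rule: less_induct)
  case (less n)
  show ?case
  proof (cases "n < N")
    case True then show ?thesis using base less.prems by blast
  next
    case False
    hence nN: "n \<ge> N" by simp
    then obtain m where nm: "n = Suc m" using N1 by (cases n) auto
    define A where "A = max \<bar>a 0 n\<bar> \<bar>a 1 n\<bar>"
    define c where "c i = P i * P i ^ n + Q i * Q i ^ n" for i
    have key: "\<bar>a i n\<bar> \<le> f n + c i * (A - f n) \<and> 0 \<le> c i \<and> c i < 1" if i: "i \<in> {0,1}" for i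
    proof -
      let ?W = "bw n (P i)"
      have P: "0 < P i" "P i < 1" "Q i = 1 - P i" using PQ[OF i] by auto
      have W: "\<And>k. 0 \<le> ?W k" using P by (intro bw_nonneg) auto
      have s0: "(\<Sum>k\<le>n. ?W k * a 0 k) = (\<Sum>k<n. ?W k * a 0 k) + P i ^ n * a 0 n"
        by (simp only: lessThan_Suc_atMost[symmetric] sum.lessThan_Suc bw_n)
      have s0f: "(\<Sum>k\<le>n. ?W k * f k) = (\<Sum>k<n. ?W k * f k) + P i ^ n * f n"
        by (simp only: lessThan_Suc_atMost[symmetric] sum.lessThan_Suc bw_n)
      have s1: "(\<Sum>k\<le>n. ?W k * a 1 (n-k)) = Q i ^ n * a 1 n + (\<Sum>k\<le>m. ?W (Suc k) * a 1 (m-k))"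
        unfolding nm by (subst sum.atMost_Suc_shift) (simp add: bw_0 P(3))
      have s1f: "(\<Sum>k\<le>n. ?W k * f (n-k)) = Q i ^ n * f n + (\<Sum>k\<le>m. ?W (Suc k) * f (m-k))"
        unfolding nm by (subst sum.atMost_Suc_shift) (simp add: bw_0 P(3))
      have b0: "\<bar>\<Sum>k<n. ?W k * a 0 k\<bar> \<le> (\<Sum>k<n. ?W k * f k)"
      proof -
        have "\<bar>\<Sum>k<n. ?W k * a 0 k\<bar> \<le> (\<Sum>k<n. \<bar>?W k * a 0 k\<bar>)" by (rule sum_abs)
        also have "\<dots> \<le> (\<Sum>k<n. ?W k * f k)"
        proof (rule sum_mono)
          fix k assume "k \<in> {..<n}"
          hence "\<bar>a 0 k\<bar> \<le> f k" using less.IH by auto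
          thus "\<bar>?W k * a 0 k\<bar> \<le> ?W k * f k" using W[of k] by (simp add: abs_mult mult_left_mono)
        qed
        finally show ?thesis .
      qed
      have b1: "\<bar>\<Sum>k\<le>m. ?W (Suc k) * a 1 (m-k)\<bar> \<le> (\<Sum>k\<le>m. ?W (Suc k) * f (m-k))"
      proof -
        have "\<bar>\<Sum>k\<le>m. ?W (Suc k) * a 1 (m-k)\<bar> \<le> (\<Sum>k\<le>m. \<bar>?W (Suc k) * a 1 (m-k)\<bar>)" by (rule sum_abs)
        also have "\<dots> \<le> (\<Sum>k\<le>m. ?W (Suc k) * f (m-k))"
        proof (rule sum_mono)
          fix k assume "k \<in> {..m}"
          have "m - k < n" using nm by simp
          hence "\<bar>a 1 (m-k)\<bar> \<le> f (m-k)" using less.IH by auto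
          thus "\<bar>?W (Suc k) * a 1 (m-k)\<bar> \<le> ?W (Suc k) * f (m-k)" using W[of "Suc k"] by (simp add: abs_mult mult_left_mono)
        qed
        finally show ?thesis .
      qed
      have A0: "\<bar>a 0 n\<bar> \<le> A" and A1: "\<bar>a 1 n\<bar> \<le> A" unfolding A_def by auto
      have Pn: "0 \<le> P i ^ n" "P i ^ n < 1" using P nm power_Suc_less_one[of "P i" m] by auto
      have Qn: "0 \<le> Q i ^ n" "Q i ^ n \<le> 1" using P by (auto intro: power_le_one)
      have st: "P i * ((\<Sum>k<n. ?W k * f k) + P i ^ n * f n) + Q i * (Q i ^ n * f n + (\<Sum>k\<le>m. ?W (Suc k) * f (m-k))) + \<bar>eps i n\<bar> \<le> f n"
        using step[OF nN i] s0f s1f by simp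
      have ai: "a i n = P i * ((\<Sum>k<n. ?W k * a 0 k) + P i ^ n * a 0 n) + Q i * (Q i ^ n * a 1 n + (\<Sum>k\<le>m. ?W (Suc k) * a 1 (m-k))) + eps i n"
        using rec[OF i] nm s0 s1 by simp
      define X0 where "X0 = (\<Sum>k<n. ?W k * a 0 k)"
      define X1 where "X1 = (\<Sum>k\<le>m. ?W (Suc k) * a 1 (m-k))"
      define F0 where "F0 = (\<Sum>k<n. ?W k * f k)"
      define F1 where "F1 = (\<Sum>k\<le>m. ?W (Suc k) * f (m-k))"
      have t1: "\<bar>P i * X0\<bar> \<le> P i * F0" using b0 P by (simp add: X0_def F0_def abs_mult)
      have t2: "\<bar>Q i * X1\<bar> \<le> Q i * F1" using b1 P by (simp add: X1_def F1_def abs_mult)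
      have t3: "\<bar>P i * (P i ^ n * a 0 n)\<bar> \<le> P i * P i ^ n * A"
        using A0 P Pn by (simp add: abs_mult mult_left_mono)
      have t4: "\<bar>Q i * (Q i ^ n * a 1 n)\<bar> \<le> Q i * Q i ^ n * A"
        using A1 P Qn by (simp add: abs_mult mult_left_mono)
      have "\<bar>a i n\<bar> \<le> P i * F0 + P i * P i ^ n * A + Q i * F1 + Q i * Q i ^ n * A + \<bar>eps i n\<bar>"
        unfolding ai X0_def[symmetric] X1_def[symmetric] using t1 t2 t3 t4
        by (simp add: algebra_simps)
      moreover have "P i * F0 + P i * P i ^ n * f n + Q i * F1 + Q i * Q i ^ n * f n + \<bar>eps i n\<bar> \<le> f n"
        using st unfolding F0_def F1_def by (simp add: algebra_simps)
      ultimately have "\<bar>a i n\<bar> \<le> f n + c i * (A - f n)" unfolding c_def by (simp add: algebra_simps)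
      moreover have "c i < 1"
      proof -
        have "P i * P i ^ n < P i * 1" using Pn P by (intro mult_strict_left_mono) auto
        moreover have "Q i * Q i ^ n \<le> Q i * 1" using Qn P by (intro mult_left_mono) auto
        ultimately show ?thesis unfolding c_def using P by linarith
      qed
      moreover have "0 \<le> c i" unfolding c_def using P Pn Qn by simp
      ultimately show ?thesis by blast
    qed
    have "A \<le> f n"
    proof (rule ccontr)
      assume H: "\<not> A \<le> f n"
      obtain j' where j': "j' \<in> {0,1}" "\<bar>a j' n\<bar> = A" unfolding A_def by (metis insertI1 insertCI max_def)
      have "c j' * (A - f n) < 1 * (A - f n)" using key[OF j'(1)] H by (intro mult_strict_right_mono) auto
      thus False using key[OF j'(1)] j'(2) by simp
    qed
    thus ?thesis using less.prems unfolding A_def by auto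
  qed
qed

lemma tangent_powr:
  fixes x m \<beta> :: real
  assumes "0 < \<beta>" "\<beta> \<le> 1" "0 \<le> x" "0 < m"
  shows "x powr \<beta> \<le> m powr \<beta> + \<beta> * m powr (\<beta>-1) * (x - m)"
proof (cases "x = 0")
  case True
  have "m powr (\<beta>-1) * m = m powr \<beta>" using powr_mult_base[of m "\<beta>-1"] assms(4) by (simp add: mult.commute)
  hence "m powr \<beta> + \<beta> * m powr (\<beta>-1) * (x - m) = (1-\<beta>) * m powr \<beta>"
    using True by (simp add: algebra_simps)
  also have "\<dots> \<ge> 0" using assms by simp
  finally show ?thesis using True assms by simp
next
  case False
  have Y: "x powr \<beta> * m powr (1-\<beta>) \<le> \<beta> * x + (1-\<beta>) * m"
    using Youngs_inequality_0[of \<beta> "1-\<beta>" x m] assms False by simp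
  have e1: "m powr (1-\<beta>) * m powr (\<beta>-1) = 1" using assms by (simp add: powr_add[symmetric])
  have e2: "m * m powr (\<beta>-1) = m powr \<beta>" using powr_mult_base[of m "\<beta>-1"] assms(4) by simp
  have pos: "0 \<le> m powr (\<beta>-1)" by simp
  have "x powr \<beta> = (x powr \<beta> * m powr (1-\<beta>)) * m powr (\<beta>-1)" using e1 by (simp add: mult.assoc)
  also have "\<dots> \<le> (\<beta> * x + (1-\<beta>) * m) * m powr (\<beta>-1)" by (rule mult_right_mono[OF Y pos])
  also have "\<dots> = m powr \<beta> + \<beta> * m powr (\<beta>-1) * (x - m)" using e2 by (simp add: algebra_simps)
  finally show ?thesis .
qed

lemma jensen_powr_concave:
  fixes x :: "nat \<Rightarrow> real"
  assumes "0 < \<beta>" "\<beta> \<le> 1" "\<And>k. 0 \<le> x k" "0 \<le> P" "P \<le> 1"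
    and m: "0 < (\<Sum>k\<le>n. bw n P k * x k)"
  shows "(\<Sum>k\<le>n. bw n P k * x k powr \<beta>) \<le> (\<Sum>k\<le>n. bw n P k * x k) powr \<beta>"
proof -
  define M where "M = (\<Sum>k\<le>n. bw n P k * x k)"
  have "(\<Sum>k\<le>n. bw n P k * x k powr \<beta>) \<le> (\<Sum>k\<le>n. bw n P k * (M powr \<beta> + \<beta> * M powr (\<beta>-1) * (x k - M)))"
    by (intro sum_mono mult_left_mono tangent_powr bw_nonneg) (use assms m in \<open>auto simp: M_def\<close>)
  also have "\<dots> = M powr \<beta> * (\<Sum>k\<le>n. bw n P k) + \<beta> * M powr (\<beta>-1) * ((\<Sum>k\<le>n. bw n P k * x k) - M * (\<Sum>k\<le>n. bw n P k))"
    by (simp add: algebra_simps sum.distrib sum_distrib_left sum_distrib_right sum_subtractf)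
  also have "\<dots> = M powr \<beta>" by (simp add: bw_sum M_def)
  finally show ?thesis by (simp add: M_def)
qed

lemma jensen_ln:
  fixes x :: "nat \<Rightarrow> real"
  assumes "\<And>k. 0 < x k" "0 \<le> P" "P \<le> 1"
  shows "(\<Sum>k\<le>n. bw n P k * ln (x k)) \<le> ln (\<Sum>k\<le>n. bw n P k * x k)"
  using concave_on_sum[OF _ _ ln_concave, of "{..n}" "bw n P" x] assms bw_sum[of n P]
  by (auto intro: bw_nonneg)

lemma powr_convex_neg:
  assumes "\<alpha> \<le> 0" shows "convex_on {0<..} (\<lambda>x::real. x powr \<alpha>)"
proof (rule f''_ge0_imp_convex[where f'="\<lambda>x. \<alpha> * x powr (\<alpha> - 1)" and f''="\<lambda>x. \<alpha> * ((\<alpha> - 1) * x powr (\<alpha> - 1 - 1))"])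
  fix x :: real assume x: "x \<in> {0<..}"
  show "((\<lambda>x. x powr \<alpha>) has_real_derivative \<alpha> * x powr (\<alpha> - 1)) (at x)"
    using x has_real_derivative_powr[of x \<alpha>] by simp
  show "((\<lambda>x. \<alpha> * x powr (\<alpha> - 1)) has_real_derivative \<alpha> * ((\<alpha> - 1) * x powr (\<alpha> - 1 - 1))) (at x)"
    using x by (intro DERIV_cmult has_real_derivative_powr) simp
  show "0 \<le> \<alpha> * ((\<alpha> - 1) * x powr (\<alpha> - 1 - 1))"
    using assms by (intro mult_nonpos_nonpos) (auto intro: mult_nonpos_nonneg)
qed auto

lemma jensen_powr_convex:
  fixes x :: "nat \<Rightarrow> real"
  assumes "\<alpha> \<le> 0" "\<And>k. 0 < x k" "0 \<le> P" "P \<le> 1"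
  shows "(\<Sum>k\<le>n. bw n P k * x k) powr \<alpha> \<le> (\<Sum>k\<le>n. bw n P k * x k powr \<alpha>)"
  using convex_on_sum[OF _ _ powr_convex_neg[OF assms(1)], of "{..n}" "bw n P" x] assms bw_sum[of n P]
  by (auto intro: bw_nonneg)

lemma bw_affine: "(\<Sum>k\<le>n. bw n P k * (B + C * g k)) = B + C * (\<Sum>k\<le>n. bw n P k * g k)"
  by (simp add: algebra_simps sum.distrib sum_distrib_left[symmetric] bw_sum)

lemma pow_sum_bound:
  fixes y :: "nat \<Rightarrow> real"
  assumes a: "0 < \<alpha>" and b: "\<beta> = min \<alpha> 1" and R: "0 < R" and P: "0 \<le> P" "P \<le> 1" and n: "n \<ge> 1"
    and y0: "\<And>k. 0 \<le> y k" and yn: "\<And>k. k \<le> n \<Longrightarrow> y k \<le> real n"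
    and m: "(\<Sum>k\<le>n. bw n P k * y k) = real n * R"
  shows "(\<Sum>k\<le>n. bw n P k * y k powr \<alpha>) \<le> real n powr \<alpha> * R powr \<beta>"
proof -
  have bpos: "0 < \<beta>" "\<beta> \<le> 1" "\<beta> \<le> \<alpha>" using a b by auto
  have 1: "y k powr \<alpha> \<le> real n powr (\<alpha>-\<beta>) * y k powr \<beta>" if k: "k \<le> n" for k
  proof (cases "y k = 0")
    case True then show ?thesis by simp
  next
    case False
    have "y k powr \<alpha> = y k powr (\<alpha>-\<beta>) * y k powr \<beta>" by (simp add: powr_add[symmetric])
    also have "\<dots> \<le> real n powr (\<alpha>-\<beta>) * y k powr \<beta>"
      by (intro mult_right_mono powr_mono2) (use bpos y0 yn[OF k] in auto)
    finally show ?thesis .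
  qed
  have "(\<Sum>k\<le>n. bw n P k * y k powr \<alpha>) \<le> (\<Sum>k\<le>n. bw n P k * (real n powr (\<alpha>-\<beta>) * y k powr \<beta>))"
    by (intro sum_mono mult_left_mono 1 bw_nonneg) (use P in auto)
  also have "\<dots> = real n powr (\<alpha>-\<beta>) * (\<Sum>k\<le>n. bw n P k * y k powr \<beta>)"
    by (simp add: sum_distrib_left mult.left_commute)
  also have "\<dots> \<le> real n powr (\<alpha>-\<beta>) * (\<Sum>k\<le>n. bw n P k * y k) powr \<beta>"
    by (intro mult_left_mono jensen_powr_concave) (use bpos y0 P m n R in auto)
  also have "\<dots> = real n powr \<alpha> * R powr \<beta>"
    unfolding m using n R by (simp add: powr_mult powr_add[symmetric])
  finally show ?thesis .
qed

lemma case_pos: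
  fixes P :: "nat \<Rightarrow> real" and a eps :: "nat \<Rightarrow> nat \<Rightarrow> real"
  assumes PP: "\<And>i. i \<in> {0,1} \<Longrightarrow> 0 < P i \<and> P i < 1"
    and rec: "\<And>i n. i \<in> {0,1} \<Longrightarrow> n \<ge> 1 \<Longrightarrow> a i n = P i * (\<Sum>k\<le>n. bw n (P i) k * a 0 k)
        + (1 - P i) * (\<Sum>k\<le>n. bw n (P i) k * a 1 (n-k)) + eps i n"
    and epsb: "\<And>i n. i \<in> {0,1} \<Longrightarrow> n \<ge> N1 \<Longrightarrow> \<bar>eps i n\<bar> \<le> K * real n powr \<alpha>"
    and K: "K > 0" and a: "\<alpha> > 0"
  shows "i \<in> {0,1} \<Longrightarrow> (\<lambda>n. a i n) \<in> O(\<lambda>n. real n powr \<alpha>)"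
proof -
  assume i0: "i \<in> {0,1}"
  define \<beta> where "\<beta> = min \<alpha> 1"
  define th where "th i = P i * P i powr \<beta> + (1 - P i) * (1 - P i) powr \<beta>" for i
  define \<theta> where "\<theta> = max (th 0) (th 1)"
  define C where "C = K / (1 - \<theta>)"
  define N where "N = max N1 1"
  define B where "B = (\<Sum>n<N. \<bar>a 0 n\<bar> + \<bar>a 1 n\<bar>)"
  define f where "f n = B + C * real n powr \<alpha>" for n
  have bpos: "0 < \<beta>" using a by (simp add: \<beta>_def)
  have th1: "th i < 1" if i: "i \<in> {0,1}" for i
  proof -
    have P: "0 < P i" "P i < 1" using PP[OF i] by auto
    have "P i powr \<beta> < 1" "(1 - P i) powr \<beta> < 1" using P bpos by (auto simp: powr01_less_one)
    hence "P i * P i powr \<beta> < P i * 1" "(1 - P i) * (1 - P i) powr \<beta> < (1 - P i) * 1"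
      using P by (intro mult_strict_left_mono; simp)+
    thus ?thesis unfolding th_def by simp
  qed
  have \<theta>1: "\<theta> < 1" unfolding \<theta>_def using th1[of 0] th1[of 1] by simp
  have C0: "0 \<le> C" unfolding C_def using K \<theta>1 by simp
  have CK: "C * \<theta> + K = C" unfolding C_def using \<theta>1 by (simp add: field_simps)
  have B0: "0 \<le> B" unfolding B_def by (intro sum_nonneg) auto
  have fB: "B \<le> f n" for n unfolding f_def using C0 by simp
  have base: "\<bar>a j n\<bar> \<le> f n" if "n < N" "j \<in> {0,1}" for n j
  proof -
    have "\<bar>a j n\<bar> \<le> \<bar>a 0 n\<bar> + \<bar>a 1 n\<bar>" using that(2) by auto
    also have "\<dots> \<le> B" unfolding B_def
      by (rule member_le_sum[where f="\<lambda>n. \<bar>a 0 n\<bar> + \<bar>a 1 n\<bar>"]) (use that in auto)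
    finally show ?thesis using fB[of n] by simp
  qed
  have step: "P i * (\<Sum>k\<le>n. bw n (P i) k * f k) + (1 - P i) * (\<Sum>k\<le>n. bw n (P i) k * f (n-k)) + \<bar>eps i n\<bar> \<le> f n"
    if n: "n \<ge> N" and i: "i \<in> {0,1}" for n i
  proof -
    have P: "0 < P i" "P i < 1" using PP[OF i] by auto
    have n1: "n \<ge> 1" "n \<ge> N1" using n by (auto simp: N_def)
    have S0: "(\<Sum>k\<le>n. bw n (P i) k * real k powr \<alpha>) \<le> real n powr \<alpha> * P i powr \<beta>"
      by (rule pow_sum_bound[OF a \<beta>_def]) (use P n1 bw_mean in auto)
    have S1: "(\<Sum>k\<le>n. bw n (P i) k * real (n-k) powr \<alpha>) \<le> real n powr \<alpha> * (1 - P i) powr \<beta>"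
      by (rule pow_sum_bound[OF a \<beta>_def]) (use P n1 bw_mean2 in auto)
    have "P i * (\<Sum>k\<le>n. bw n (P i) k * f k) + (1 - P i) * (\<Sum>k\<le>n. bw n (P i) k * f (n-k)) + \<bar>eps i n\<bar>
        = P i * (B + C * (\<Sum>k\<le>n. bw n (P i) k * real k powr \<alpha>)) + (1 - P i) * (B + C * (\<Sum>k\<le>n. bw n (P i) k * real (n-k) powr \<alpha>)) + \<bar>eps i n\<bar>"
      unfolding f_def by (simp only: bw_affine)
    also have "\<dots> \<le> P i * (B + C * (real n powr \<alpha> * P i powr \<beta>)) + (1 - P i) * (B + C * (real n powr \<alpha> * (1 - P i) powr \<beta>)) + K * real n powr \<alpha>"
      using S0 S1 P C0 epsb[OF i n1(2)]
      by (intro add_mono mult_left_mono) auto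
    also have "\<dots> = B + real n powr \<alpha> * (C * th i + K)" unfolding th_def by (simp add: algebra_simps)
    also have "\<dots> \<le> B + real n powr \<alpha> * (C * \<theta> + K)"
      using C0 i by (intro add_left_mono mult_left_mono add_right_mono) (auto simp: \<theta>_def)
    also have "\<dots> = f n" unfolding CK f_def by simp
    finally show ?thesis .
  qed
  have bound: "\<bar>a i n\<bar> \<le> f n" for n
    by (rule compare[where P=P and Q="\<lambda>i. 1 - P i" and N=N and eps=eps])
       (use PP rec base step i0 in \<open>auto simp: N_def\<close>)
  show ?thesis
  proof (rule bigoI[where c="B + C"])
    show "eventually (\<lambda>n. norm (a i n) \<le> (B + C) * norm (real n powr \<alpha>)) at_top"
      unfolding eventually_at_top_linorder
    proof (intro exI[of _ 1] allI impI)
      fix n :: nat assume "n \<ge> 1"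
      hence ge: "1 \<le> real n powr \<alpha>" using a by (intro ge_one_powr_ge_zero) auto
      have "\<bar>a i n\<bar> \<le> B + C * real n powr \<alpha>" using bound[of n] by (simp add: f_def)
      also have "\<dots> \<le> B * real n powr \<alpha> + C * real n powr \<alpha>"
        using B0 ge by (simp add: mult_left_mono[of 1 _ B, simplified])
      finally show "norm (a i n) \<le> (B + C) * norm (real n powr \<alpha>)" by (simp add: algebra_simps)
    qed
  qed
qed

lemma lim_frac: "(\<lambda>n. (real n * P + 1) / (real n + 1)) \<longlonglongrightarrow> (P::real)"
proof -
  have "(\<lambda>n. P + (1 - P) * inverse (real (Suc n))) \<longlonglongrightarrow> P + (1 - P) * 0"
    by (intro tendsto_add tendsto_const tendsto_mult LIMSEQ_inverse_real_of_nat)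
  moreover have "(\<lambda>n. P + (1 - P) * inverse (real (Suc n))) = (\<lambda>n. (real n * P + 1) / (real n + 1))"
  proof
    fix n
    have "real n + 1 > 0" by simp
    thus "P + (1 - P) * inverse (real (Suc n)) = (real n * P + 1) / (real n + 1)"
      by (simp add: field_simps)
  qed
  ultimately show ?thesis by simp
qed

lemma bw_mean1: "(\<Sum>k\<le>n. bw n P k * (real k + 1)) = real n * P + 1"
  by (simp add: distrib_left sum.distrib bw_mean bw_sum)

lemma bw_mean21: "(\<Sum>k\<le>n. bw n P k * (real (n - k) + 1)) = real n * (1 - P) + 1"
  by (simp only: distrib_left sum.distrib mult_1_right bw_mean2 bw_sum)

lemma case_zero:
  fixes P :: "nat \<Rightarrow> real" and a eps :: "nat \<Rightarrow> nat \<Rightarrow> real"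
  assumes PP: "\<And>i. i \<in> {0,1} \<Longrightarrow> 0 < P i \<and> P i < 1"
    and rec: "\<And>i n. i \<in> {0,1} \<Longrightarrow> n \<ge> 1 \<Longrightarrow> a i n = P i * (\<Sum>k\<le>n. bw n (P i) k * a 0 k)
        + (1 - P i) * (\<Sum>k\<le>n. bw n (P i) k * a 1 (n-k)) + eps i n"
    and epsb: "\<And>i n. i \<in> {0,1} \<Longrightarrow> n \<ge> N1 \<Longrightarrow> \<bar>eps i n\<bar> \<le> K * real n powr 0"
    and K: "K > 0"
  shows "i \<in> {0,1} \<Longrightarrow> (\<lambda>n. a i n) \<in> O(\<lambda>n. ln (real n))"
proof -
  assume i0: "i \<in> {0,1}"
  define Hi where "Hi i = - (P i * ln (P i) + (1 - P i) * ln (1 - P i))" for i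
  define H where "H = min (Hi 0) (Hi 1)"
  define h where "h i n = P i * ln ((real n * P i + 1) / (real n + 1))
      + (1 - P i) * ln ((real n * (1 - P i) + 1) / (real n + 1))" for i n
  have Hpos: "0 < Hi i" if i: "i \<in> {0,1}" for i
  proof -
    have P: "0 < P i" "P i < 1" using PP[OF i] by auto
    have "ln (P i) < 0" "ln (1 - P i) < 0" using P by auto
    hence "P i * ln (P i) < 0" "(1 - P i) * ln (1 - P i) < 0" using P by (auto simp: mult_pos_neg)
    thus ?thesis unfolding Hi_def by simp
  qed
  have H0: "0 < H" unfolding H_def using Hpos[of 0] Hpos[of 1] by simp
  have ev: "eventually (\<lambda>n. h i n < - H / 2) sequentially" if i: "i \<in> {0,1}" for i
  proof -
    have P: "0 < P i" "P i < 1" using PP[OF i] by auto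
    have l1: "(\<lambda>n. ln ((real n * P i + 1) / (real n + 1))) \<longlonglongrightarrow> ln (P i)"
      by (rule tendsto_ln[OF lim_frac]) (use P in simp)
    have l2: "(\<lambda>n. ln ((real n * (1 - P i) + 1) / (real n + 1))) \<longlonglongrightarrow> ln (1 - P i)"
      by (rule tendsto_ln[OF lim_frac]) (use P in simp)
    have "h i \<longlonglongrightarrow> P i * ln (P i) + (1 - P i) * ln (1 - P i)"
      unfolding h_def by (intro tendsto_add tendsto_mult tendsto_const l1 l2)
    hence lim: "h i \<longlonglongrightarrow> - Hi i" unfolding Hi_def by (simp add: add.commute)
    have "- Hi i < - H / 2" using H0 i by (auto simp: H_def)
    thus ?thesis using order_tendstoD(2)[OF lim] by blast
  qed
  obtain N2 where N2: "\<And>n i. n \<ge> N2 \<Longrightarrow> i \<in> {0,1} \<Longrightarrow> h i n < - H / 2"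
  proof -
    have "eventually (\<lambda>n. h 0 n < - H / 2 \<and> h 1 n < - H / 2) sequentially"
      using ev[of 0] ev[of 1] by (auto intro: eventually_conj)
    then obtain M where "\<And>n. n \<ge> M \<Longrightarrow> h 0 n < - H / 2 \<and> h 1 n < - H / 2"
      unfolding eventually_sequentially by blast
    thus ?thesis using that by blast
  qed
  define C where "C = 2 * K / H"
  define N where "N = max (max N1 N2) 1"
  define B where "B = (\<Sum>n<N. \<bar>a 0 n\<bar> + \<bar>a 1 n\<bar>)"
  define f where "f n = B + C * ln (real n + 1)" for n
  have C0: "0 \<le> C" unfolding C_def using K H0 by simp
  have CH: "C * (H / 2) = K" unfolding C_def using H0 by simp
  have B0: "0 \<le> B" unfolding B_def by (intro sum_nonneg) auto
  have fB: "B \<le> f n" for n unfolding f_def using C0 by simp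
  have base: "\<bar>a j n\<bar> \<le> f n" if "n < N" "j \<in> {0,1}" for n j
  proof -
    have "\<bar>a j n\<bar> \<le> \<bar>a 0 n\<bar> + \<bar>a 1 n\<bar>" using that(2) by auto
    also have "\<dots> \<le> B" unfolding B_def
      by (rule member_le_sum[where f="\<lambda>n. \<bar>a 0 n\<bar> + \<bar>a 1 n\<bar>"]) (use that in auto)
    finally show ?thesis using fB[of n] by simp
  qed
  have step: "P i * (\<Sum>k\<le>n. bw n (P i) k * f k) + (1 - P i) * (\<Sum>k\<le>n. bw n (P i) k * f (n-k)) + \<bar>eps i n\<bar> \<le> f n"
    if n: "n \<ge> N" and i: "i \<in> {0,1}" for n i
  proof -
    have P: "0 < P i" "P i < 1" using PP[OF i] by auto
    have n1: "n \<ge> 1" "n \<ge> N1" "n \<ge> N2" using n by (auto simp: N_def)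
    have S0: "(\<Sum>k\<le>n. bw n (P i) k * ln (real k + 1)) \<le> ln (real n * P i + 1)"
      using jensen_ln[of "\<lambda>k. real k + 1" "P i" n] P by (simp add: bw_mean1)
    have S1: "(\<Sum>k\<le>n. bw n (P i) k * ln (real (n-k) + 1)) \<le> ln (real n * (1 - P i) + 1)"
      using jensen_ln[of "\<lambda>k. real (n-k) + 1" "P i" n, unfolded bw_mean21] P by simp
    have e: "\<bar>eps i n\<bar> \<le> K" using epsb[OF i n1(2)] n1(1) by simp
    have pos1: "real n * P i + 1 > 0" "real n * (1 - P i) + 1 > 0" using P by (auto intro: add_nonneg_pos)
    have hn: "h i n = P i * ln (real n * P i + 1) + (1 - P i) * ln (real n * (1 - P i) + 1) - ln (real n + 1)"
      unfolding h_def using pos1 by (simp add: ln_div algebra_simps)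
    have "P i * (\<Sum>k\<le>n. bw n (P i) k * f k) + (1 - P i) * (\<Sum>k\<le>n. bw n (P i) k * f (n-k)) + \<bar>eps i n\<bar>
        = P i * (B + C * (\<Sum>k\<le>n. bw n (P i) k * ln (real k + 1))) + (1 - P i) * (B + C * (\<Sum>k\<le>n. bw n (P i) k * ln (real (n-k) + 1))) + \<bar>eps i n\<bar>"
      unfolding f_def by (simp only: bw_affine)
    also have "\<dots> \<le> P i * (B + C * ln (real n * P i + 1)) + (1 - P i) * (B + C * ln (real n * (1 - P i) + 1)) + K"
      using S0 S1 P C0 e by (intro add_mono mult_left_mono) auto
    also have "\<dots> = B + C * (h i n + ln (real n + 1)) + K" unfolding hn by (simp add: algebra_simps)
    also have "\<dots> \<le> B + C * (- H / 2 + ln (real n + 1)) + K"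
      using N2[OF n1(3) i] C0 by (intro add_mono mult_left_mono) auto
    also have "\<dots> = f n" unfolding f_def using CH by (simp add: algebra_simps)
    finally show ?thesis .
  qed
  have bound: "\<bar>a i n\<bar> \<le> f n" for n
    by (rule compare[where P=P and Q="\<lambda>i. 1 - P i" and N=N and eps=eps])
       (use PP rec base step i0 in \<open>auto simp: N_def\<close>)
  show ?thesis
  proof (rule bigoI[where c="B + 2 * C"])
    show "eventually (\<lambda>n. norm (a i n) \<le> (B + 2 * C) * norm (ln (real n))) at_top"
      unfolding eventually_at_top_linorder
    proof (intro exI[of _ 3] allI impI)
      fix n :: nat assume n3: "n \<ge> 3"
      have "exp 1 \<le> real n" using exp_le n3 by linarith
      hence l1: "1 \<le> ln (real n)" using n3 by (subst ln_ge_iff) auto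
      have "3 * n \<le> n * n" using n3 by (intro mult_right_mono) auto
      hence "n + 1 \<le> n * n" using n3 by linarith
      hence "real (n + 1) \<le> real (n * n)" by (simp only: of_nat_le_iff)
      hence "real n + 1 \<le> real n * real n" by simp
      hence "ln (real n + 1) \<le> ln (real n * real n)" using n3 by (intro ln_mono) auto
      also have "\<dots> = 2 * ln (real n)" using n3 by (simp add: ln_mult)
      finally have l2: "ln (real n + 1) \<le> 2 * ln (real n)" .
      have "\<bar>a i n\<bar> \<le> B + C * ln (real n + 1)" using bound[of n] by (simp add: f_def)
      also have "\<dots> \<le> B * ln (real n) + C * (2 * ln (real n))"
        using B0 C0 l1 l2 by (intro add_mono mult_left_mono) (auto simp: mult_left_mono[of 1 _ B, simplified])
      finally show "norm (a i n) \<le> (B + 2 * C) * norm (ln (real n))" using l1 by (simp add: algebra_simps)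
    qed
  qed
qed

lemma case_neg:
  fixes P :: "nat \<Rightarrow> real" and a eps :: "nat \<Rightarrow> nat \<Rightarrow> real"
  assumes PP: "\<And>i. i \<in> {0,1} \<Longrightarrow> 0 < P i \<and> P i < 1"
    and rec: "\<And>i n. i \<in> {0,1} \<Longrightarrow> n \<ge> 1 \<Longrightarrow> a i n = P i * (\<Sum>k\<le>n. bw n (P i) k * a 0 k)
        + (1 - P i) * (\<Sum>k\<le>n. bw n (P i) k * a 1 (n-k)) + eps i n"
    and epsb: "\<And>i n. i \<in> {0,1} \<Longrightarrow> n \<ge> N1 \<Longrightarrow> \<bar>eps i n\<bar> \<le> K * real n powr \<alpha>"
    and K: "K > 0" and a: "\<alpha> < 0"
  shows "i \<in> {0,1} \<Longrightarrow> (\<lambda>n. a i n) \<in> O(\<lambda>n. 1)"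
proof -
  assume i0: "i \<in> {0,1}"
  define La where "La i = P i * P i powr \<alpha> + (1 - P i) * (1 - P i) powr \<alpha>" for i
  define L where "L = min (La 0) (La 1)"
  define g where "g i n = P i * ((real n * P i + 1) / (real n + 1)) powr \<alpha>
      + (1 - P i) * ((real n * (1 - P i) + 1) / (real n + 1)) powr \<alpha>" for i n
  define r where "r n = (real n / (real n + 1)) powr \<alpha>" for n
  have Lpos: "1 < La i" if i: "i \<in> {0,1}" for i
  proof -
    have P: "0 < P i" "P i < 1" using PP[OF i] by auto
    have "1 < P i powr \<alpha>" "1 < (1 - P i) powr \<alpha>" using P a powr_less_mono2_neg[of \<alpha> "P i" 1] powr_less_mono2_neg[of \<alpha> "1 - P i" 1] by auto
    hence "P i * 1 < P i * P i powr \<alpha>" "(1 - P i) * 1 < (1 - P i) * (1 - P i) powr \<alpha>"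
      using P by (intro mult_strict_left_mono; simp)+
    thus ?thesis unfolding La_def by simp
  qed
  have L1: "1 < L" unfolding L_def using Lpos[of 0] Lpos[of 1] by simp
  have ev: "eventually (\<lambda>n. g i n > (1 + L) / 2) sequentially" if i: "i \<in> {0,1}" for i
  proof -
    have P: "0 < P i" "P i < 1" using PP[OF i] by auto
    have l1: "(\<lambda>n. ((real n * P i + 1) / (real n + 1)) powr \<alpha>) \<longlonglongrightarrow> P i powr \<alpha>"
      by (rule tendsto_powr[OF lim_frac tendsto_const]) (use P in simp)
    have l2: "(\<lambda>n. ((real n * (1 - P i) + 1) / (real n + 1)) powr \<alpha>) \<longlonglongrightarrow> (1 - P i) powr \<alpha>"
      by (rule tendsto_powr[OF lim_frac tendsto_const]) (use P in simp)
    have lim: "g i \<longlonglongrightarrow> La i"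
      unfolding g_def La_def by (intro tendsto_add tendsto_mult tendsto_const l1 l2)
    have "(1 + L) / 2 < La i" using L1 i Lpos[OF i] by (auto simp: L_def)
    thus ?thesis using order_tendstoD(1)[OF lim] by blast
  qed
  have evr: "eventually (\<lambda>n. r n < 2) sequentially"
  proof -
    have "(\<lambda>n. real n / (real n + 1)) \<longlonglongrightarrow> 1"
      using LIMSEQ_n_over_Suc_n[where 'a=real] by (simp add: add.commute)
    hence "r \<longlonglongrightarrow> 1 powr \<alpha>" unfolding r_def by (rule tendsto_powr[OF _ tendsto_const]) simp
    thus ?thesis using order_tendstoD(2) by fastforce
  qed
  obtain N2 where N2: "\<And>n i. n \<ge> N2 \<Longrightarrow> i \<in> {0,1} \<Longrightarrow> g i n > (1 + L) / 2 \<and> r n < 2"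
  proof -
    have "eventually (\<lambda>n. g 0 n > (1 + L) / 2 \<and> g 1 n > (1 + L) / 2 \<and> r n < 2) sequentially"
      using ev[of 0] ev[of 1] evr by (auto intro: eventually_conj)
    then obtain M where "\<And>n. n \<ge> M \<Longrightarrow> g 0 n > (1 + L) / 2 \<and> g 1 n > (1 + L) / 2 \<and> r n < 2"
      unfolding eventually_sequentially by blast
    thus ?thesis using that by blast
  qed
  define C where "C = 4 * K / (L - 1)"
  define N where "N = max (max N1 N2) 1"
  define B where "B = (\<Sum>n<N. \<bar>a 0 n\<bar> + \<bar>a 1 n\<bar>)"
  define f where "f n = (B + C) + (- C) * (real n + 1) powr \<alpha>" for n
  have C0: "0 \<le> C" unfolding C_def using K L1 by simp
  have CL: "C * ((L - 1) / 2) = 2 * K" unfolding C_def using L1 by simp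
  have B0: "0 \<le> B" unfolding B_def by (intro sum_nonneg) auto
  have le1: "(real n + 1) powr \<alpha> \<le> 1" for n
    using powr_mono2'[of \<alpha> 1 "real n + 1"] a by simp
  have fB: "B \<le> f n" "f n \<le> B + C" for n
  proof -
    have "C * (real n + 1) powr \<alpha> \<le> C * 1" using C0 le1[of n] by (intro mult_left_mono) auto
    thus "B \<le> f n" unfolding f_def by simp
    show "f n \<le> B + C" unfolding f_def using C0 by simp
  qed
  have base: "\<bar>a j n\<bar> \<le> f n" if "n < N" "j \<in> {0,1}" for n j
  proof -
    have "\<bar>a j n\<bar> \<le> \<bar>a 0 n\<bar> + \<bar>a 1 n\<bar>" using that(2) by auto
    also have "\<dots> \<le> B" unfolding B_def
      by (rule member_le_sum[where f="\<lambda>n. \<bar>a 0 n\<bar> + \<bar>a 1 n\<bar>"]) (use that in auto)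
    finally show ?thesis using fB(1)[of n] by simp
  qed
  have step: "P i * (\<Sum>k\<le>n. bw n (P i) k * f k) + (1 - P i) * (\<Sum>k\<le>n. bw n (P i) k * f (n-k)) + \<bar>eps i n\<bar> \<le> f n"
    if n: "n \<ge> N" and i: "i \<in> {0,1}" for n i
  proof -
    have P: "0 < P i" "P i < 1" using PP[OF i] by auto
    have n1: "n \<ge> 1" "n \<ge> N1" "n \<ge> N2" using n by (auto simp: N_def)
    have S0: "(real n * P i + 1) powr \<alpha> \<le> (\<Sum>k\<le>n. bw n (P i) k * (real k + 1) powr \<alpha>)"
      using jensen_powr_convex[of \<alpha> "\<lambda>k. real k + 1" "P i" n, unfolded bw_mean1] P a by simp
    have S1: "(real n * (1 - P i) + 1) powr \<alpha> \<le> (\<Sum>k\<le>n. bw n (P i) k * (real (n-k) + 1) powr \<alpha>)"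
      using jensen_powr_convex[of \<alpha> "\<lambda>k. real (n-k) + 1" "P i" n, unfolded bw_mean21] P a by simp
    have e: "\<bar>eps i n\<bar> \<le> K * real n powr \<alpha>" using epsb[OF i n1(2)] .
    define E where "E = (real n + 1) powr \<alpha>"
    have E0: "0 < E" unfolding E_def by simp
    have q1: "(real n * P i + 1) powr \<alpha> = ((real n * P i + 1) / (real n + 1)) powr \<alpha> * E"
      unfolding E_def powr_divide by simp
    have q2: "(real n * (1 - P i) + 1) powr \<alpha> = ((real n * (1 - P i) + 1) / (real n + 1)) powr \<alpha> * E"
      unfolding E_def powr_divide by simp
    have q3: "real n powr \<alpha> = r n * E" unfolding E_def r_def powr_divide by simp
    have gE: "P i * (real n * P i + 1) powr \<alpha> + (1 - P i) * (real n * (1 - P i) + 1) powr \<alpha> = g i n * E"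
      unfolding q1 q2 g_def by (simp add: algebra_simps)
    have grn: "g i n > (1 + L) / 2" "r n < 2" using N2[OF n1(3) i] by auto
    have key: "K * (r n * E) + C * E \<le> C * (g i n * E)"
    proof -
      have "K * r n \<le> 2 * K" using grn K by simp
      also have "\<dots> = C * ((L - 1) / 2)" using CL by simp
      also have "\<dots> \<le> C * (g i n - 1)" using grn C0 by (intro mult_left_mono) auto
      finally have "K * r n + C \<le> C * g i n" by (simp add: algebra_simps)
      hence "(K * r n + C) * E \<le> (C * g i n) * E" using E0 by (intro mult_right_mono) auto
      thus ?thesis by (simp add: algebra_simps)
    qed
    have "P i * (\<Sum>k\<le>n. bw n (P i) k * f k) + (1 - P i) * (\<Sum>k\<le>n. bw n (P i) k * f (n-k)) + \<bar>eps i n\<bar>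
        = P i * ((B + C) + (- C) * (\<Sum>k\<le>n. bw n (P i) k * (real k + 1) powr \<alpha>)) + (1 - P i) * ((B + C) + (- C) * (\<Sum>k\<le>n. bw n (P i) k * (real (n-k) + 1) powr \<alpha>)) + \<bar>eps i n\<bar>"
      unfolding f_def by (simp only: bw_affine)
    also have "\<dots> \<le> P i * ((B + C) - C * (real n * P i + 1) powr \<alpha>) + (1 - P i) * ((B + C) - C * (real n * (1 - P i) + 1) powr \<alpha>) + K * real n powr \<alpha>"
    proof -
      have "C * (real n * P i + 1) powr \<alpha> \<le> C * (\<Sum>k\<le>n. bw n (P i) k * (real k + 1) powr \<alpha>)"
        using S0 C0 by (rule mult_left_mono)
      moreover have "C * (real n * (1 - P i) + 1) powr \<alpha> \<le> C * (\<Sum>k\<le>n. bw n (P i) k * (real (n-k) + 1) powr \<alpha>)"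
        using S1 C0 by (rule mult_left_mono)
      ultimately show ?thesis using P e by (intro add_mono mult_left_mono) auto
    qed
    also have "\<dots> = (B + C) - C * (P i * (real n * P i + 1) powr \<alpha> + (1 - P i) * (real n * (1 - P i) + 1) powr \<alpha>) + K * real n powr \<alpha>"
      by (simp add: algebra_simps)
    also have "\<dots> = (B + C) - C * (g i n * E) + K * (r n * E)"
      by (simp only: gE q3)
    also have "\<dots> \<le> (B + C) - C * E" using key by simp
    also have "\<dots> = f n" unfolding f_def E_def by simp
    finally show ?thesis .
  qed
  have bound: "\<bar>a i n\<bar> \<le> f n" for n
    by (rule compare[where P=P and Q="\<lambda>i. 1 - P i" and N=N and eps=eps])
       (use PP rec base step i0 in \<open>auto simp: N_def\<close>)
  show ?thesis
  proof (rule bigoI[where c="B + C"])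
    show "eventually (\<lambda>n. norm (a i n) \<le> (B + C) * norm (1::real)) at_top"
    proof (rule always_eventually, rule allI)
      fix n
      show "norm (a i n) \<le> (B + C) * norm (1::real)" using bound[of n] fB(2)[of n] by simp
    qed
  qed
qed

theorem lemma4p3:
  fixes p :: "nat \<Rightarrow> nat \<Rightarrow> real"
    and a eps :: "nat \<Rightarrow> nat \<Rightarrow> real"
    and \<alpha> :: real
  assumes p_range: "\<And>i j. i \<in> {0,1} \<Longrightarrow> j \<in> {0,1} \<Longrightarrow> 0 < p i j \<and> p i j < 1"
    and p_stoch: "\<And>i. i \<in> {0,1} \<Longrightarrow> p i 0 + p i 1 = 1"
    and rec: "\<And>i n. i \<in> {0,1} \<Longrightarrow> n \<ge> 1 \<Longrightarrow>
       a i n = p i 0 * measure_pmf.expectation (binomial_pmf n (p i 0)) (\<lambda>k. a 0 k)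
             + p i 1 * measure_pmf.expectation (binomial_pmf n (p i 0)) (\<lambda>k. a 1 (n - k))
             + eps i n"
    and eps_O: "\<And>i. i \<in> {0,1} \<Longrightarrow> (\<lambda>n. eps i n) \<in> O(\<lambda>n. real n powr \<alpha>)"
  shows "\<forall>i\<in>{0,1}.
           (\<alpha> < 0 \<longrightarrow> (\<lambda>n. a i n) \<in> O(\<lambda>n. 1)) \<and>
           (\<alpha> > 0 \<longrightarrow> (\<lambda>n. a i n) \<in> O(\<lambda>n. real n powr \<alpha>)) \<and>
           (\<alpha> = 0 \<longrightarrow> (\<lambda>n. a i n) \<in> O(\<lambda>n. ln (real n)))"
proof -
  define P where "P i = p i 0" for i
  have PP: "\<And>i. i \<in> {0,1} \<Longrightarrow> 0 < P i \<and> P i < 1" using p_range unfolding P_def by blast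
  have p1: "p i 1 = 1 - P i" if "i \<in> {0,1}" for i using p_stoch[OF that] unfolding P_def by simp
  have rec2: "a i n = P i * (\<Sum>k\<le>n. bw n (P i) k * a 0 k)
        + (1 - P i) * (\<Sum>k\<le>n. bw n (P i) k * a 1 (n-k)) + eps i n"
    if i: "i \<in> {0,1}" and n: "n \<ge> 1" for i n
  proof -
    have "0 \<le> P i" "P i \<le> 1" using PP[OF i] by auto
    thus ?thesis using rec[OF i n] p1[OF i] unfolding P_def[symmetric] by (simp add: exp_bw)
  qed
  have epsO: "\<exists>c>0. \<exists>M. \<forall>n\<ge>M. \<bar>eps i n\<bar> \<le> c * real n powr \<alpha>" if i: "i \<in> {0,1}" for i
  proof -
    from eps_O[OF i] obtain c where c: "c > 0"
      and ev: "eventually (\<lambda>n. norm (eps i n) \<le> c * norm (real n powr \<alpha>)) at_top"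
      unfolding bigo_def by blast
    from ev obtain M where "\<forall>n\<ge>M. norm (eps i n) \<le> c * norm (real n powr \<alpha>)"
      unfolding eventually_at_top_linorder by blast
    thus ?thesis using c by auto
  qed
  obtain c0 M0 where c0: "c0 > 0" "\<And>n. n \<ge> M0 \<Longrightarrow> \<bar>eps 0 n\<bar> \<le> c0 * real n powr \<alpha>"
    using epsO[of 0] by auto
  obtain c1 M1 where c1: "c1 > 0" "\<And>n. n \<ge> M1 \<Longrightarrow> \<bar>eps 1 n\<bar> \<le> c1 * real n powr \<alpha>"
    using epsO[of 1] by auto
  define K where "K = max c0 c1"
  define N1 where "N1 = max M0 M1"
  have K: "K > 0" using c0 c1 by (simp add: K_def)
  have epsb: "\<bar>eps i n\<bar> \<le> K * real n powr \<alpha>" if i: "i \<in> {0,1}" and n: "n \<ge> N1" for i n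
  proof -
    have "c0 * real n powr \<alpha> \<le> K * real n powr \<alpha>" "c1 * real n powr \<alpha> \<le> K * real n powr \<alpha>"
      by (intro mult_right_mono; simp add: K_def)+
    thus ?thesis using i n c0(2)[of n] c1(2)[of n] by (auto simp: N1_def)
  qed
  show ?thesis
  proof (intro ballI conjI impI)
    fix i :: nat assume i: "i \<in> {0,1}"
    { assume "\<alpha> < 0"
      thus "(\<lambda>n. a i n) \<in> O(\<lambda>n. 1)"
        using case_neg[of P a eps N1 K \<alpha> i] PP rec2 epsb K i by blast }
    { assume "\<alpha> > 0"
      thus "(\<lambda>n. a i n) \<in> O(\<lambda>n. real n powr \<alpha>)"
        using case_pos[of P a eps N1 K \<alpha> i] PP rec2 epsb K i by blast }
    { assume a0: "\<alpha> = 0"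
      show "(\<lambda>n. a i n) \<in> O(\<lambda>n. ln (real n))"
        using case_zero[of P a eps N1 K i] PP rec2 epsb[unfolded a0] K i by blast }
  qed
qed

end
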